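(* Let $\mathcal{C}$ be a $q$-ary cyclic code of length $n$ and minimum distance $d$, and let $\mathcal{L}$ be a $q_\ell$-ary cyclic code of length $n_\ell$, dimension $k_\ell$ and minimum distance $d_\ell$, where $\mathbb{F}_{q_\ell}=\mathbb{F}_{q^u}$ is an extension field of $\mathbb{F}_q$ and $\gcd(n,n_\ell)=1$. Suppose that $\mathcal{L}$ is a non-zero-locator code of $\mathcal{C}$ (as defined in the context) with associated integers $\mu\ge 2$ and $e$. Then $$d \;\ge\; d^{\ast}:=\left\lceil \frac{\mu}{d_\ell}\right\rceil .$$
   Context: A $q$-ary cyclic code $\mathcal{C}$ of length $n$ (with $\gcd(n,q)=1$, so $x^n-1$ has $n$ distinct roots) is an ideal of $\mathbb{F}_q[x]/(x^n-1)$; codewords $c=(c_0,\dots,c_{n-1})$ are identified with polynomials $c(x)=\sum_{i=0}^{n-1}c_ix^i$. Non-zero-locator code: let $\mathcal{C}$ be a $q$-ary cyclic code of length $n$ and $\mathcal{L}$ a cyclic code of length $n_\ell$ over $\mathbb{F}_{q_\ell}=\mathbb{F}_{q^u}$ (with $\gcd(n_\ell,q)=1$), with $\gcd(n,n_\ell)=1$. Let $\alpha$ be an element of multiplicative order $n$ and $\beta$ an element of multiplicative order $n_\ell$, both lying in a common finite extension field of $\mathbb{F}_q$ (e.g. $\alpha$ in $\mathbb{F}_{q^s}$, $\beta$ in $\mathbb{F}_{q_\ell^{s_\ell}}$, both contained in $\mathbb{F}_{q^r}$ with $r=\mathrm{lcm}(s,u s_\ell)$). Then $\mathcal{L}$ is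 called a non-zero-locator code of $\mathcal{C}$ if there exist an integer $\mu\ge 2$ and an integer $e$ such that for all $a(x)\in\mathcal{L}$ and all $c(x)\in\mathcal{C}$, $$\sum_{j=0}^{\infty} c(\alpha^{j+e})\,a(\beta^j)\,x^j \equiv 0 \pmod{x^{\mu-1}}$$ as formal power series, i.e. $c(\alpha^{j+e})a(\beta^j)=0$ for $j=0,\dots,\mu-2$. *)

theory Defs
  imports Complex_Main
begin

text \<open>All fields are realised as subfields of one ambient finite field of type 'a
  (the common extension F_{q^r}).\<close>

definition subfield :: "'a::field set \<Rightarrow> bool" where
  "subfield K \<longleftrightarrow> 0 \<in> K \<and> 1 \<in> K \<and>
     (\<forall>x\<in>K. \<forall>y\<in>K. x + y \<in> K \<and> x * y \<in> K) \<and>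
     (\<forall>x\<in>K. - x \<in> K) \<and> (\<forall>x\<in>K. x \<noteq> 0 \<longrightarrow> inverse x \<in> K)"

text \<open>Codewords are lists (c_0,...,c_{n-1}); a cyclic code of length n over K is a
  K-linear subspace of K^n closed under cyclic shifts (equivalently an ideal of
  K[x]/(x^n-1)); gcd(n,q)=1 is required as in the paper.\<close>

definition cyclic_code :: "'a::field set \<Rightarrow> nat \<Rightarrow> 'a list set \<Rightarrow> bool" where
  "cyclic_code K n C \<longleftrightarrow> subfield K \<and> finite K \<and> coprime n (card K) \<and>
     (\<forall>c\<in>C. length c = n \<and> set c \<subseteq> K) \<and>
     replicate n 0 \<in> C \<and>
     (\<forall>c\<in>C. \<forall>c'\<in>C. map2 (+) c c' \<in> C) \<and>
     (\<forall>s\<in>K. \<forall>c\<in>C. map (\<lambda>x. s * x) c \<in> C) \<and>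
     (\<forall>c\<in>C. rotate1 c \<in> C)"

definition weight :: "'a::zero list \<Rightarrow> nat" where
  "weight c = card {i. i < length c \<and> c ! i \<noteq> 0}"

definition min_dist :: "'a::zero list set \<Rightarrow> nat" where
  "min_dist C = Min {weight c | c. c \<in> C \<and> (\<exists>x\<in>set c. x \<noteq> 0)}"

definition cw_eval :: "'a::comm_ring_1 list \<Rightarrow> 'a \<Rightarrow> 'a" where
  "cw_eval c x = (\<Sum>i<length c. c ! i * x ^ i)"

definition has_mult_order :: "'a::monoid_mult \<Rightarrow> nat \<Rightarrow> bool" where
  "has_mult_order a n \<longleftrightarrow> n > 0 \<and> a ^ n = 1 \<and> (\<forall>k. 0 < k \<and> k < n \<longrightarrow> a ^ k \<noteq> 1)"

definition non_zero_locator ::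
  "'a::field list set \<Rightarrow> 'a list set \<Rightarrow> 'a \<Rightarrow> 'a \<Rightarrow> nat \<Rightarrow> int \<Rightarrow> bool" where
  "non_zero_locator L C \<alpha> \<beta> \<mu> e \<longleftrightarrow> \<mu> \<ge> 2 \<and>
     (\<forall>a\<in>L. \<forall>c\<in>C. \<forall>j < \<mu> - 1.
        cw_eval c (\<alpha> powi (int j + e)) * cw_eval a (\<beta> ^ j) = 0)"

end

theory Submission
  imports Defs "HOL-Number_Theory.Cong"
begin

lemma vand:
  fixes b r :: "'i \<Rightarrow> 'a::field"
  assumes "finite S" "inj_on r S" "\<forall>j<card S. (\<Sum>k\<in>S. b k * r k ^ j) = 0"
  shows "\<forall>k\<in>S. b k = 0"
  using assms
proof (induction S arbitrary: b rule: finite_induct)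
  case empty then show ?case by simp
next
  case (insert k0 S)
  define b' where "b' k = b k * (r k - r k0)" for k
  have inj: "inj_on r S" using insert.prems by (auto intro: inj_on_subset)
  have cs: "card (insert k0 S) = Suc (card S)" using insert.hyps by simp
  have "\<forall>j<card S. (\<Sum>k\<in>S. b' k * r k ^ j) = 0"
  proof (intro allI impI)
    fix j assume j: "j < card S"
    have h1: "(\<Sum>k\<in>insert k0 S. b k * r k ^ Suc j) = 0" using insert.prems(2) cs j by auto
    have h0: "(\<Sum>k\<in>insert k0 S. b k * r k ^ j) = 0" using insert.prems(2) cs j by auto
    have "(\<Sum>k\<in>S. b' k * r k ^ j) = (\<Sum>k\<in>S. b k * r k ^ Suc j - r k0 * (b k * r k ^ j))"
      by (rule sum.cong) (auto simp: b'_def algebra_simps)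
    also have "\<dots> = (\<Sum>k\<in>insert k0 S. b k * r k ^ Suc j) - r k0 * (\<Sum>k\<in>insert k0 S. b k * r k ^ j)"
      using insert.hyps by (simp add: sum_subtractf sum_distrib_left algebra_simps)
    also have "\<dots> = 0" using h0 h1 by simp
    finally show "(\<Sum>k\<in>S. b' k * r k ^ j) = 0" .
  qed
  then have "\<forall>k\<in>S. b' k = 0" using insert.IH inj by blast
  moreover have "\<forall>k\<in>S. r k \<noteq> r k0" using insert.prems(1) insert.hyps
    unfolding inj_on_def by blast
  ultimately have bS: "\<forall>k\<in>S. b k = 0" by (auto simp: b'_def)
  have "(\<Sum>k\<in>insert k0 S. b k * r k ^ 0) = 0" using insert.prems(2) cs by auto
  then have "b k0 = 0" using insert.hyps bS by simp
  then show ?case using bS by simp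
qed

lemma order_nz: "has_mult_order (a::'a::field) n \<Longrightarrow> a \<noteq> 0"
  unfolding has_mult_order_def by (metis power_0_left zero_neq_one gr0_implies_Suc)

lemma pow_mod_eq: "has_mult_order (a::'a::field) n \<Longrightarrow> a ^ x = a ^ (x mod n)"
proof -
  assume h: "has_mult_order a n"
  have "a ^ x = a ^ (n * (x div n) + x mod n)" by simp
  also have "\<dots> = (a ^ n) ^ (x div n) * a ^ (x mod n)" by (simp only: power_add power_mult)
  finally show ?thesis using h by (simp add: has_mult_order_def)
qed

lemma pow_inj_lt:
  assumes h: "has_mult_order (a::'a::field) n" and "x < n" "y < n" "a ^ x = a ^ y"
  shows "x = y"
proof (rule ccontr)
  assume ne: "x \<noteq> y"
  have nz: "a \<noteq> 0" using order_nz[OF h] .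
  { fix x y assume xy: "x < y" "y < n" "a ^ x = a ^ y"
    have "a ^ y = a ^ x * a ^ (y - x)" using xy by (metis power_add le_add_diff_inverse less_imp_le)
    then have "a ^ (y - x) = 1" using xy nz by simp
    moreover have "0 < y - x" "y - x < n" using xy by auto
    ultimately have False using h by (simp add: has_mult_order_def) }
  then show False using ne assms by (metis linorder_neq_iff)
qed

lemma pow_eq_mod:
  assumes h: "has_mult_order (a::'a::field) n" and "a ^ x = a ^ y"
  shows "x mod n = y mod n"
proof -
  have n: "n > 0" using h by (simp add: has_mult_order_def)
  show ?thesis
    by (rule pow_inj_lt[OF h]) (use assms n pow_mod_eq[OF h, of x] pow_mod_eq[OF h, of y] in auto)
qed

lemma pair_inj:
  fixes \<alpha> \<beta> :: "'a::field"
  assumes ha: "has_mult_order \<alpha> n" and hb: "has_mult_order \<beta> nl" and cp: "coprime n nl"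
  shows "inj_on (\<lambda>(i,l). \<alpha> ^ i * \<beta> ^ l) ({..<n} \<times> {..<nl})"
proof (rule inj_onI, clarsimp)
  fix i l i' l' assume i: "i < n" "i' < n" and l: "l < nl" "l' < nl"
    and eq: "\<alpha> ^ i * \<beta> ^ l = \<alpha> ^ i' * \<beta> ^ l'"
  have b1: "\<beta> ^ nl = 1" using hb by (simp add: has_mult_order_def)
  have "(\<alpha> ^ i * \<beta> ^ l) ^ nl = (\<alpha> ^ i' * \<beta> ^ l') ^ nl" using eq by simp
  then have "\<alpha> ^ (i * nl) = \<alpha> ^ (i' * nl)"
    by (simp add: power_mult_distrib flip: power_mult) (simp add: power_mult mult.commute[of _ nl] b1)
  then have "(i * nl) mod n = (i' * nl) mod n" by (rule pow_eq_mod[OF ha])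
  then have "[i * nl = i' * nl] (mod n)" by (simp add: cong_def)
  then have "[i = i'] (mod n)" using cp by (simp add: cong_mult_rcancel_nat coprime_commute)
  then have ii: "i = i'" using i by (simp add: cong_def)
  then have "\<beta> ^ l = \<beta> ^ l'" using eq order_nz[OF ha] by simp
  then have "l = l'" using pow_inj_lt[OF hb] l by blast
  then show "i = i' \<and> l = l'" using ii by simp
qed


lemma eval_restrict:
  fixes c :: "'a::field list"
  shows "cw_eval c (x * y) = (\<Sum>i\<in>{i. i < length c \<and> c ! i \<noteq> 0}. (c ! i * y ^ i) * (x ^ i))"
proof -
  have "cw_eval c (x * y) = (\<Sum>i<length c. (c ! i * y ^ i) * (x ^ i))"
    unfolding cw_eval_def by (rule sum.cong) (auto simp: power_mult_distrib)
  also have "\<dots> = (\<Sum>i\<in>{i. i < length c \<and> c ! i \<noteq> 0}. (c ! i * y ^ i) * (x ^ i))"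
    by (rule sum.mono_neutral_right) auto
  finally show ?thesis .
qed

lemma weight_pos:
  fixes c :: "'a::zero list"
  assumes "\<exists>x\<in>set c. x \<noteq> 0" shows "weight c > 0"
proof -
  obtain i where "i < length c" "c ! i \<noteq> 0" using assms by (metis in_set_conv_nth)
  then show ?thesis unfolding weight_def by (subst card_gt_0_iff) auto
qed

lemma weight_le: "weight c \<le> length c"
  unfolding weight_def by (rule order_trans[OF card_mono[of "{..<length c}"]]) auto

lemma prod_bound:
  fixes \<alpha> \<beta> :: "'a::field" and c a :: "'a list"
  assumes ha: "has_mult_order \<alpha> n" and hb: "has_mult_order \<beta> nl" and cp: "coprime n nl"
    and lc: "length c = n" and la: "length a = nl"
    and cnz: "\<exists>x\<in>set c. x \<noteq> 0" and anz: "\<exists>x\<in>set a. x \<noteq> 0"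
    and van: "\<forall>j < \<mu> - 1. cw_eval c (\<alpha> powi (int j + e)) * cw_eval a (\<beta> ^ j) = 0"
    and mu: "\<mu> \<ge> 2"
  shows "\<mu> \<le> weight c * weight a"
proof (rule ccontr)
  assume "\<not> \<mu> \<le> weight c * weight a"
  define Sc where "Sc = {i. i < length c \<and> c ! i \<noteq> 0}"
  define Sa where "Sa = {i. i < length a \<and> a ! i \<noteq> 0}"
  define S where "S = Sc \<times> Sa"
  define \<gamma> where "\<gamma> = \<alpha> powi e"
  define r where "r = (\<lambda>(i::nat,l::nat). \<alpha> ^ i * \<beta> ^ l)"
  define b where "b = (\<lambda>(i::nat,l::nat). (c ! i * \<gamma> ^ i) * (a ! l * 1 ^ l))"
  have fin: "finite S" unfolding S_def Sc_def Sa_def by auto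
  have cS: "card S = weight c * weight a" unfolding S_def Sc_def Sa_def weight_def
    by (simp add: card_cartesian_product)
  have inj: "inj_on r S"
    by (rule inj_on_subset[OF pair_inj[OF ha hb cp, folded r_def]])
       (auto simp: S_def Sc_def Sa_def lc la)
  have anz0: "\<alpha> \<noteq> 0" using order_nz[OF ha] .
  have "\<forall>j<card S. (\<Sum>k\<in>S. b k * r k ^ j) = 0"
  proof (intro allI impI)
    fix j assume j: "j < card S"
    then have j': "j < \<mu> - 1" using \<open>\<not> \<mu> \<le> weight c * weight a\<close> cS by linarith
    have e1: "\<alpha> powi (int j + e) = \<alpha> ^ j * \<gamma>"
      using anz0 by (simp add: \<gamma>_def power_int_add)
    have v: "cw_eval c (\<alpha> powi (int j + e)) * cw_eval a (\<beta> ^ j) = 0" using van j' by blast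
    have v2: "cw_eval c (\<alpha> ^ j * \<gamma>) * cw_eval a (\<beta> ^ j * 1) = 0"
      using v by (simp only: e1 mult_1_right)
    have "0 = cw_eval c (\<alpha> ^ j * \<gamma>) * cw_eval a (\<beta> ^ j * 1)"
      using v2 by (rule sym)
    also have "\<dots> = (\<Sum>i\<in>Sc. (c ! i * \<gamma> ^ i) * (\<alpha> ^ j) ^ i) * (\<Sum>l\<in>Sa. (a ! l * 1 ^ l) * (\<beta> ^ j) ^ l)"
      unfolding eval_restrict Sc_def Sa_def ..
    also have "\<dots> = (\<Sum>k\<in>S. b k * r k ^ j)"
      unfolding sum_product S_def sum.cartesian_product b_def r_def
      by (rule sum.cong) (auto simp: power_mult_distrib algebra_simps simp flip: power_mult)
    finally show "(\<Sum>k\<in>S. b k * r k ^ j) = 0" by simp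
  qed
  then have b0: "\<forall>k\<in>S. b k = 0" using vand[OF fin inj] by blast
  from cnz obtain x where x: "x \<in> set c" "x \<noteq> 0" by blast
  then obtain i where i0: "i < length c" "c ! i = x" by (auto simp: in_set_conv_nth)
  from anz obtain y where y: "y \<in> set a" "y \<noteq> 0" by blast
  then obtain l where l0: "l < length a" "a ! l = y" by (auto simp: in_set_conv_nth)
  have "(i, l) \<in> S" using i0 l0 x y by (simp add: S_def Sc_def Sa_def)
  moreover have gnz: "\<gamma> \<noteq> 0" using anz0 by (simp add: \<gamma>_def)
  have "b (i, l) \<noteq> 0" using i0 l0 x y gnz by (simp add: b_def)
  ultimately show False using b0 by blast
qed

lemma min_dist_obtain:
  assumes "\<forall>c\<in>C. length c = (n::nat)" and "\<exists>c\<in>C. \<exists>x\<in>set c. x \<noteq> (0::'a::zero)"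
  obtains c where "c \<in> C" "\<exists>x\<in>set c. x \<noteq> 0" "weight c = min_dist C"
proof -
  let ?W = "{weight c | c. c \<in> C \<and> (\<exists>x\<in>set c. x \<noteq> 0)}"
  have "?W \<subseteq> {..n}" using assms(1) weight_le by fastforce
  then have "finite ?W" by (rule finite_subset) auto
  moreover have "?W \<noteq> {}" using assms(2) by blast
  ultimately have "min_dist C \<in> ?W" unfolding min_dist_def by (rule Min_in)
  then obtain c where "c \<in> C" "\<exists>x\<in>set c. x \<noteq> 0" "min_dist C = weight c" by blast
  then show ?thesis using that by metis
qed

theorem theorem2:
  fixes K Kl :: "'a::{field,finite} set"
    and C L :: "'a list set"
    and n nl \<mu> :: nat and e :: int and \<alpha> \<beta> :: 'a
  assumes "subfield K" and "subfield Kl" and "K \<subseteq> Kl"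
    and "cyclic_code K n C" and "cyclic_code Kl nl L"
    and "coprime n nl"
    and "\<exists>c\<in>C. \<exists>x\<in>set c. x \<noteq> 0"
    and "\<exists>a\<in>L. \<exists>x\<in>set a. x \<noteq> 0"
    and "has_mult_order \<alpha> n" and "has_mult_order \<beta> nl"
    and "non_zero_locator L C \<alpha> \<beta> \<mu> e"
  shows "int (min_dist C) \<ge> ceiling (real \<mu> / real (min_dist L))"
proof -
  have lC: "\<forall>c\<in>C. length c = n" using assms(4) by (simp add: cyclic_code_def)
  have lL: "\<forall>c\<in>L. length c = nl" using assms(5) by (simp add: cyclic_code_def)
  obtain c where c: "c \<in> C" "\<exists>x\<in>set c. x \<noteq> 0" "weight c = min_dist C"
    using min_dist_obtain[OF lC assms(7)] by blast
  obtain a where a: "a \<in> L" "\<exists>x\<in>set a. x \<noteq> 0" "weight a = min_dist L"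
    using min_dist_obtain[OF lL assms(8)] by blast
  have "\<mu> \<le> weight c * weight a"
  proof (rule prod_bound[OF assms(9) assms(10) assms(6), where e=e])
    show "\<forall>j<\<mu> - 1. cw_eval c (\<alpha> powi (int j + e)) * cw_eval a (\<beta> ^ j) = 0"
      using assms(11) c(1) a(1) unfolding non_zero_locator_def by blast
    show "2 \<le> \<mu>" using assms(11) unfolding non_zero_locator_def by blast
    show "length c = n" using c lC by blast
    show "length a = nl" using a lL by blast
    show "\<exists>x\<in>set c. x \<noteq> 0" by (rule c(2))
    show "\<exists>x\<in>set a. x \<noteq> 0" by (rule a(2))
  qed
  then have le: "\<mu> \<le> min_dist C * min_dist L" using a c by simp
  have pos: "min_dist L > 0" using weight_pos[OF a(2)] a(3) by simp
  have "real \<mu> / real (min_dist L) \<le> real (min_dist C)"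
  proof -
    have "real \<mu> \<le> real (min_dist C) * real (min_dist L)" using le by (metis of_nat_le_iff of_nat_mult)
    then show ?thesis using pos by (simp add: divide_le_eq)
  qed
  then show ?thesis by (simp only: ceiling_le_iff of_int_of_nat_eq)
qed

end
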